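(* Let $(V^{(k)})_{k\ge1}$ be a sequence of $n$-parameter persistence modules that is Cauchy for the interleaving distance. Then there is an $n$-parameter persistence module $V$ with $d_I(V^{(k)},V)\to0$ as $k\to\infty$; moreover $V$ can be constructed as a colimit of shifts of the modules of a subsequence of $(V^{(k)})$ along shifts of interleaving morphisms.
   Context: Fix a field $\mathbb{k}$. An $n$-parameter persistence module is a functor $V:\mathbf{R}^n\to\mathbf{Vect}_{\mathbb{k}}$ ($\mathbf{R}^n$ with componentwise order). For $s\in\mathbb{R}^n$, $\varepsilon\in\mathbb{R}$, $s+\varepsilon$ adds $\varepsilon$ to each coordinate; $V[\varepsilon]_s=V_{s+\varepsilon}$ and $\eta_\varepsilon:V\to V[\varepsilon]$ ($\varepsilon\ge0$) consists of structure maps. An $\varepsilon$-interleaving between $V$ and $W$ is a pair $f:V\to W[\varepsilon]$, $g:W\to V[\varepsilon]$ with $g[\varepsilon]\circ f=\eta^V_{2\varepsilon}$ and $f[\varepsilon]\circ g=\eta^W_{2\varepsilon}$; $d_I(V,W)$ is the infimum of $\varepsilon\ge0$ for which an $\varepsilon$-interleaving exists. *)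

theory Defs
  imports "HOL-Analysis.Analysis" "HOL-Library.Function_Algebras"
begin

text \<open>Vector spaces over a field 'k are represented as subspaces of an ambient
  'k-vector space of type 'v (with scalar multiplication sc satisfying the
  axioms of the library locale vector_space).  The poset R^n is real^'n with the
  componentwise order (library order on vec).\<close>

definition subspace_of :: "('k::field \<Rightarrow> 'v::ab_group_add \<Rightarrow> 'v) \<Rightarrow> 'v set \<Rightarrow> bool" where
  "subspace_of sc S \<longleftrightarrow> 0 \<in> S \<and> (\<forall>x\<in>S. \<forall>y\<in>S. x + y \<in> S) \<and> (\<forall>c. \<forall>x\<in>S. sc c x \<in> S)"

definition lin_on :: "('k::field \<Rightarrow> 'v::ab_group_add \<Rightarrow> 'v) \<Rightarrow> ('k \<Rightarrow> 'w::ab_group_add \<Rightarrow> 'w)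
    \<Rightarrow> 'v set \<Rightarrow> 'w set \<Rightarrow> ('v \<Rightarrow> 'w) \<Rightarrow> bool" where
  "lin_on sc1 sc2 S T f \<longleftrightarrow> (\<forall>x\<in>S. f x \<in> T) \<and> (\<forall>x\<in>S. \<forall>y\<in>S. f (x + y) = f x + f y)
      \<and> (\<forall>c. \<forall>x\<in>S. f (sc1 c x) = sc2 c (f x))"

record ('n, 'v) pmod =
  sp :: "real^'n \<Rightarrow> 'v set"
  mp :: "real^'n \<Rightarrow> real^'n \<Rightarrow> 'v \<Rightarrow> 'v"

definition is_pmod :: "('k::field \<Rightarrow> 'v::ab_group_add \<Rightarrow> 'v) \<Rightarrow> ('n::finite, 'v) pmod \<Rightarrow> bool" where
  "is_pmod sc V \<longleftrightarrow>
     (\<forall>s. subspace_of sc (sp V s)) \<and>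
     (\<forall>s t. s \<le> t \<longrightarrow> lin_on sc sc (sp V s) (sp V t) (mp V s t)) \<and>
     (\<forall>s. \<forall>x\<in>sp V s. mp V s s x = x) \<and>
     (\<forall>s t u. s \<le> t \<longrightarrow> t \<le> u \<longrightarrow> (\<forall>x\<in>sp V s. mp V t u (mp V s t x) = mp V s u x))"

definition sh :: "real \<Rightarrow> real^'n::finite \<Rightarrow> real^'n" where
  "sh e s = s + (\<chi> i. e)"

definition shift_pmod :: "real \<Rightarrow> ('n::finite, 'v) pmod \<Rightarrow> ('n, 'v) pmod" where
  "shift_pmod e V = \<lparr> sp = (\<lambda>s. sp V (sh e s)), mp = (\<lambda>s t. mp V (sh e s) (sh e t)) \<rparr>"

definition morph :: "('k::field \<Rightarrow> 'v::ab_group_add \<Rightarrow> 'v) \<Rightarrow> ('k \<Rightarrow> 'w::ab_group_add \<Rightarrow> 'w) \<Rightarrow> real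
    \<Rightarrow> ('n::finite, 'v) pmod \<Rightarrow> ('n, 'w) pmod \<Rightarrow> (real^'n \<Rightarrow> 'v \<Rightarrow> 'w) \<Rightarrow> bool" where
  "morph scV scW e V W f \<longleftrightarrow>
     (\<forall>s. lin_on scV scW (sp V s) (sp W (sh e s)) (f s)) \<and>
     (\<forall>s t. s \<le> t \<longrightarrow> (\<forall>x\<in>sp V s. f t (mp V s t x) = mp W (sh e s) (sh e t) (f s x)))"

definition interleaving :: "('k::field \<Rightarrow> 'v::ab_group_add \<Rightarrow> 'v) \<Rightarrow> ('k \<Rightarrow> 'w::ab_group_add \<Rightarrow> 'w) \<Rightarrow> real
    \<Rightarrow> ('n::finite, 'v) pmod \<Rightarrow> ('n, 'w) pmod
    \<Rightarrow> (real^'n \<Rightarrow> 'v \<Rightarrow> 'w) \<Rightarrow> (real^'n \<Rightarrow> 'w \<Rightarrow> 'v) \<Rightarrow> bool" where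
  "interleaving scV scW e V W f g \<longleftrightarrow> 0 \<le> e \<and>
     morph scV scW e V W f \<and> morph scW scV e W V g \<and>
     (\<forall>s. \<forall>x\<in>sp V s. g (sh e s) (f s x) = mp V s (sh (2*e) s) x) \<and>
     (\<forall>s. \<forall>y\<in>sp W s. f (sh e s) (g s y) = mp W s (sh (2*e) s) y)"

definition interleaved :: "('k::field \<Rightarrow> 'v::ab_group_add \<Rightarrow> 'v) \<Rightarrow> ('k \<Rightarrow> 'w::ab_group_add \<Rightarrow> 'w) \<Rightarrow> real
    \<Rightarrow> ('n::finite, 'v) pmod \<Rightarrow> ('n, 'w) pmod \<Rightarrow> bool" where
  "interleaved scV scW e V W \<longleftrightarrow> (\<exists>f g. interleaving scV scW e V W f g)"

text \<open>Interleaving distance, valued in extended reals (\<infinity> if no interleaving exists).\<close>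
definition dI :: "('k::field \<Rightarrow> 'v::ab_group_add \<Rightarrow> 'v) \<Rightarrow> ('k \<Rightarrow> 'w::ab_group_add \<Rightarrow> 'w)
    \<Rightarrow> ('n::finite, 'v) pmod \<Rightarrow> ('n, 'w) pmod \<Rightarrow> ereal" where
  "dI scV scW V W = Inf (ereal ` {e. 0 \<le> e \<and> interleaved scV scW e V W})"

definition fun_scale :: "('k \<Rightarrow> 'v \<Rightarrow> 'v) \<Rightarrow> 'k \<Rightarrow> (nat \<Rightarrow> 'v) \<Rightarrow> (nat \<Rightarrow> 'v)" where
  "fun_scale sc c f = (\<lambda>i. sc c (f i))"

fun seq_trans :: "(nat \<Rightarrow> real^'n::finite \<Rightarrow> 'v \<Rightarrow> 'v) \<Rightarrow> nat \<Rightarrow> nat \<Rightarrow> real^'n \<Rightarrow> 'v \<Rightarrow> 'v" where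
  "seq_trans g j 0 s x = x"
| "seq_trans g j (Suc d) s x = g (j + d) s (seq_trans g j d s x)"

text \<open>Colimits of functors to Vect are computed pointwise, and a sequential
  colimit of vector spaces is characterised by: the cocone is jointly surjective and
  an element is killed by \<iota> j iff it is killed by some transition map.\<close>
definition is_seq_colim :: "('k::field \<Rightarrow> 'v::ab_group_add \<Rightarrow> 'v) \<Rightarrow> ('k \<Rightarrow> 'w::ab_group_add \<Rightarrow> 'w)
    \<Rightarrow> (nat \<Rightarrow> ('n::finite, 'v) pmod) \<Rightarrow> (nat \<Rightarrow> real^'n \<Rightarrow> 'v \<Rightarrow> 'v)
    \<Rightarrow> ('n, 'w) pmod \<Rightarrow> (nat \<Rightarrow> real^'n \<Rightarrow> 'v \<Rightarrow> 'w) \<Rightarrow> bool" where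
  "is_seq_colim scU scV U g V \<iota> \<longleftrightarrow>
     (\<forall>j. morph scU scU 0 (U j) (U (Suc j)) (g j)) \<and>
     (\<forall>j. morph scU scV 0 (U j) V (\<iota> j)) \<and>
     (\<forall>j s. \<forall>x\<in>sp (U j) s. \<iota> (Suc j) s (g j s x) = \<iota> j s x) \<and>
     (\<forall>s. \<forall>y\<in>sp V s. \<exists>j. \<exists>x\<in>sp (U j) s. \<iota> j s x = y) \<and>
     (\<forall>j s. \<forall>x\<in>sp (U j) s. \<iota> j s x = 0 \<longrightarrow> (\<exists>d. seq_trans g j d s x = 0))"

end

theory Submission
  imports Defs
begin

lemma projection_exists:
  fixes scale :: "'a::field \<Rightarrow> 'b::ab_group_add \<Rightarrow> 'b"
  assumes vs: "vector_space scale" and sN: "module.subspace scale N" and sT: "module.subspace scale T"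
    and NT: "N \<subseteq> T"
  shows "\<exists>P. Vector_Spaces.linear scale scale P \<and> (\<forall>x\<in>N. P x = 0) \<and> (\<forall>x\<in>T. P x \<in> T \<and> x - P x \<in> N)"
proof -
  interpret vector_space scale by (rule vs)
  interpret vp: vector_space_pair scale scale by unfold_locales
  obtain BN where BN: "BN \<subseteq> N" "independent BN" "N \<subseteq> span BN"
    by (rule basis_exists)
  obtain B where B: "BN \<subseteq> B" "B \<subseteq> T" "independent B" "T \<subseteq> span B"
    using maximal_independent_subset_extend[of BN T] BN NT by blast
  define P where "P = vp.construct B (\<lambda>b. if b \<in> BN then 0 else b)"
  have lin: "Vector_Spaces.linear scale scale P" unfolding P_def by (rule vp.linear_construct[OF B(3)])
  have PB: "b \<in> B \<Longrightarrow> P b = (if b \<in> BN then 0 else b)" for b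
    unfolding P_def by (rule vp.construct_basis[OF B(3)])
  have spanN: "span BN = N" using BN sN by (intro span_subspace) auto
  have spanT: "span B = T" using B sT by (intro span_subspace) auto
  have k: "P x = 0" if "x \<in> N" for x
  proof -
    have "x \<in> span BN" using that spanN by simp
    then show ?thesis
    proof (induct rule: span_induct)
      case base
      show ?case unfolding subspace_def
        using vp.linear_0[OF lin] vp.linear_add[OF lin] vp.linear_scale[OF lin] by auto
    next
      case (step x) then show ?case using PB B(1) by auto
    qed
  qed
  have d: "x - P x \<in> N" if "x \<in> T" for x
  proof -
    have "x \<in> span B" using that spanT by simp
    then show ?thesis
    proof (induct rule: span_induct)
      case base
      show ?case unfolding subspace_def
      proof (intro conjI ballI allI)
        show "0 \<in> {x. x - P x \<in> N}" using vp.linear_0[OF lin] sN by (simp add: subspace_def)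
        fix x y assume "x \<in> {x. x - P x \<in> N}" "y \<in> {x. x - P x \<in> N}"
        then have "(x - P x) + (y - P y) \<in> N" using sN by (simp add: subspace_def)
        then show "x + y \<in> {x. x - P x \<in> N}" using vp.linear_add[OF lin] by (simp add: algebra_simps)
      next
        fix c x assume "x \<in> {x. x - P x \<in> N}"
        then have "scale c (x - P x) \<in> N" using sN by (simp add: subspace_def)
        then show "scale c x \<in> {x. x - P x \<in> N}" using vp.linear_scale[OF lin]
          by (simp add: scale_right_diff_distrib)
      qed
    next
      case (step x) then show ?case using PB BN sN by (auto simp: subspace_def)
    qed
  qed
  have "P x \<in> T" if "x \<in> T" for x
  proof -
    have "x - (x - P x) \<in> T" using d[OF that] NT that sT subspace_diff by blast
    then show ?thesis by simp
  qed
  then show ?thesis using lin k d by blast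
qed

lemma sh_sh[simp]: "sh a (sh b s) = sh (b + a) s"
  unfolding sh_def by (simp add: vec_eq_iff algebra_simps)

lemma sh_0[simp]: "sh 0 s = s"
  unfolding sh_def by (simp add: vec_eq_iff)

lemma sh_le: "a \<le> b \<Longrightarrow> sh a s \<le> sh b s"
  unfolding sh_def by (simp add: less_eq_vec_def)

lemma sh_mono: "s \<le> t \<Longrightarrow> sh a s \<le> sh a t"
  unfolding sh_def by (simp add: less_eq_vec_def)

lemma le_sh: "0 \<le> a \<Longrightarrow> s \<le> sh a s"
  using sh_le[of 0 a s] by simp

lemma subspace_of_iff: "vector_space sc \<Longrightarrow> subspace_of sc S \<longleftrightarrow> module.subspace sc S"
  unfolding subspace_of_def by (simp add: module.subspace_def module_iff_vector_space)

lemma vs_fun: "vector_space sc \<Longrightarrow> vector_space (fun_scale sc)"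
  unfolding vector_space_def fun_scale_def
  by (auto simp: fun_eq_iff)

lemma so_0: "subspace_of sc S \<Longrightarrow> 0 \<in> S" by (simp add: subspace_of_def)
lemma so_add: "subspace_of sc S \<Longrightarrow> x \<in> S \<Longrightarrow> y \<in> S \<Longrightarrow> x + y \<in> S" by (simp add: subspace_of_def)
lemma so_scale: "subspace_of sc S \<Longrightarrow> x \<in> S \<Longrightarrow> sc c x \<in> S" by (simp add: subspace_of_def)
lemma so_diff: "vector_space sc \<Longrightarrow> subspace_of sc S \<Longrightarrow> x \<in> S \<Longrightarrow> y \<in> S \<Longrightarrow> x - y \<in> S"
  by (metis subspace_of_iff module.subspace_diff module_iff_vector_space)
lemma so_neg: "vector_space sc \<Longrightarrow> subspace_of sc S \<Longrightarrow> x \<in> S \<Longrightarrow> - x \<in> S"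
  by (metis subspace_of_iff module.subspace_neg module_iff_vector_space)

lemma lin_in: "lin_on sc1 sc2 S T f \<Longrightarrow> x \<in> S \<Longrightarrow> f x \<in> T" by (simp add: lin_on_def)
lemma lin_add: "lin_on sc1 sc2 S T f \<Longrightarrow> x \<in> S \<Longrightarrow> y \<in> S \<Longrightarrow> f (x + y) = f x + f y" by (simp add: lin_on_def)
lemma lin_scale: "lin_on sc1 sc2 S T f \<Longrightarrow> x \<in> S \<Longrightarrow> f (sc1 c x) = sc2 c (f x)" by (simp add: lin_on_def)
lemma lin_0: "lin_on sc1 sc2 S T f \<Longrightarrow> subspace_of sc1 S \<Longrightarrow> f 0 = 0"
proof -
  assume l: "lin_on sc1 sc2 S T f" and s: "subspace_of sc1 S"
  have "f (0 + 0) = f 0 + f 0" using lin_add[OF l] so_0[OF s] by blast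
  then show ?thesis by simp
qed
lemma lin_neg: "vector_space sc1 \<Longrightarrow> vector_space sc2 \<Longrightarrow> lin_on sc1 sc2 S T f \<Longrightarrow> subspace_of sc1 S \<Longrightarrow> x \<in> S \<Longrightarrow> f (- x) = - f x"
proof -
  assume v1: "vector_space sc1" and v2: "vector_space sc2" and l: "lin_on sc1 sc2 S T f" and s: "subspace_of sc1 S" and x: "x \<in> S"
  have "f (sc1 (-1) x) = sc2 (-1) (f x)" using lin_scale[OF l x] .
  moreover have "sc1 (-1) x = - x" using v1
    by (metis module.scale_minus_left module.scale_one module_iff_vector_space)
  moreover have "sc2 (-1) (f x) = - f x" using v2
    by (metis module.scale_minus_left module.scale_one module_iff_vector_space)
  ultimately show ?thesis by simp
qed
lemma lin_diff: "vector_space sc1 \<Longrightarrow> vector_space sc2 \<Longrightarrow> lin_on sc1 sc2 S T f \<Longrightarrow> subspace_of sc1 S \<Longrightarrow> x \<in> S \<Longrightarrow> y \<in> S \<Longrightarrow> f (x - y) = f x - f y"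
proof -
  assume v1: "vector_space sc1" and v2: "vector_space sc2" and l: "lin_on sc1 sc2 S T f" and s: "subspace_of sc1 S" and x: "x \<in> S" and y: "y \<in> S"
  have "f (x + - y) = f x + f (- y)" using lin_add[OF l x so_neg[OF v1 s y]] .
  then show ?thesis using lin_neg[OF v1 v2 l s y] by simp
qed

context fixes sc :: "'k::field \<Rightarrow> 'v::ab_group_add \<Rightarrow> 'v" and X :: "('n::finite, 'v) pmod"
  assumes pmX: "is_pmod sc X"
begin
lemma pm_sub: "subspace_of sc (sp X s)" using pmX by (simp add: is_pmod_def)
lemma pm_lin: "s \<le> t \<Longrightarrow> lin_on sc sc (sp X s) (sp X t) (mp X s t)" using pmX by (simp add: is_pmod_def)
lemma pm_in: "s \<le> t \<Longrightarrow> x \<in> sp X s \<Longrightarrow> mp X s t x \<in> sp X t" using lin_in[OF pm_lin] by blast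
lemma pm_add: "s \<le> t \<Longrightarrow> x \<in> sp X s \<Longrightarrow> y \<in> sp X s \<Longrightarrow> mp X s t (x + y) = mp X s t x + mp X s t y"
  using lin_add[OF pm_lin] by blast
lemma pm_scale: "s \<le> t \<Longrightarrow> x \<in> sp X s \<Longrightarrow> mp X s t (sc c x) = sc c (mp X s t x)"
  using lin_scale[OF pm_lin] by blast
lemma pm_zero: "s \<le> t \<Longrightarrow> mp X s t 0 = 0" using lin_0[OF pm_lin pm_sub] by blast
lemma pm_id: "x \<in> sp X s \<Longrightarrow> mp X s s x = x" using pmX by (simp add: is_pmod_def)
lemma pm_comp: "s \<le> t \<Longrightarrow> t \<le> u \<Longrightarrow> x \<in> sp X s \<Longrightarrow> mp X t u (mp X s t x) = mp X s u x"
  using pmX by (simp add: is_pmod_def)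
end

lemma morph_lin: "morph s1 s2 e X Y f \<Longrightarrow> lin_on s1 s2 (sp X s) (sp Y (sh e s)) (f s)"
  by (simp add: morph_def)
lemma morph_in: "morph s1 s2 e X Y f \<Longrightarrow> x \<in> sp X s \<Longrightarrow> f s x \<in> sp Y (sh e s)"
  by (simp add: morph_def lin_on_def)
lemma morph_add: "morph s1 s2 e X Y f \<Longrightarrow> x \<in> sp X s \<Longrightarrow> y \<in> sp X s \<Longrightarrow> f s (x + y) = f s x + f s y"
  by (simp add: morph_def lin_on_def)
lemma morph_scale: "morph s1 s2 e X Y f \<Longrightarrow> x \<in> sp X s \<Longrightarrow> f s (s1 c x) = s2 c (f s x)"
  by (simp add: morph_def lin_on_def)
lemma morph_nat: "morph s1 s2 e X Y f \<Longrightarrow> s \<le> t \<Longrightarrow> x \<in> sp X s \<Longrightarrow> f t (mp X s t x) = mp Y (sh e s) (sh e t) (f s x)"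
  by (simp add: morph_def)

lemma fun_add_apply: "(f + g) i = f i + g i" by (simp add: plus_fun_def)
lemma fun_diff_apply: "(f - g) i = f i - g i" by simp
lemma fun_zero_apply: "(0 :: nat \<Rightarrow> 'a::zero) i = 0" by (simp add: zero_fun_def)
lemma fs_apply: "fun_scale sc c f i = sc c (f i)" by (simp add: fun_scale_def)

locale colim_setup =
  fixes sc :: "'k::field \<Rightarrow> 'v::ab_group_add \<Rightarrow> 'v"
    and U :: "nat \<Rightarrow> ('n::finite, 'v) pmod"
    and g :: "nat \<Rightarrow> real^'n \<Rightarrow> 'v \<Rightarrow> 'v"
  assumes vs: "vector_space sc"
    and pm: "\<And>j. is_pmod sc (U j)"
    and gm: "\<And>j. morph sc sc 0 (U j) (U (Suc j)) (g j)"
begin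

abbreviation "fs \<equiv> fun_scale sc"

lemma vsf: "vector_space fs" by (rule vs_fun[OF vs])

lemma sc0: "sc c 0 = 0"
  using vs by (metis module.scale_zero_right module_iff_vector_space)

lemma g_in: "x \<in> sp (U j) s \<Longrightarrow> g j s x \<in> sp (U (Suc j)) s"
  using morph_in[OF gm] by fastforce
lemma g_add: "x \<in> sp (U j) s \<Longrightarrow> y \<in> sp (U j) s \<Longrightarrow> g j s (x + y) = g j s x + g j s y"
  using morph_add[OF gm] by blast
lemma g_scale: "x \<in> sp (U j) s \<Longrightarrow> g j s (sc c x) = sc c (g j s x)"
  using morph_scale[OF gm] by blast
lemma g_lin: "lin_on sc sc (sp (U j) s) (sp (U (Suc j)) s) (g j s)"
  using morph_lin[OF gm, of j s] by simp
lemma g_0: "g j s 0 = 0" using lin_0[OF g_lin pm_sub[OF pm]] .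
lemma g_diff: "x \<in> sp (U j) s \<Longrightarrow> y \<in> sp (U j) s \<Longrightarrow> g j s (x - y) = g j s x - g j s y"
  using lin_diff[OF vs vs g_lin pm_sub[OF pm]] by blast
lemma g_nat: "s \<le> t \<Longrightarrow> x \<in> sp (U j) s \<Longrightarrow> g j t (mp (U j) s t x) = mp (U (Suc j)) s t (g j s x)"
  using morph_nat[OF gm] by fastforce

lemma sub0: "0 \<in> sp (U j) s" using so_0[OF pm_sub[OF pm]] .
lemma subadd: "x \<in> sp (U j) s \<Longrightarrow> y \<in> sp (U j) s \<Longrightarrow> x + y \<in> sp (U j) s" using so_add[OF pm_sub[OF pm]] .
lemma subscale: "x \<in> sp (U j) s \<Longrightarrow> sc c x \<in> sp (U j) s" using so_scale[OF pm_sub[OF pm]] .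
lemma subdiff: "x \<in> sp (U j) s \<Longrightarrow> y \<in> sp (U j) s \<Longrightarrow> x - y \<in> sp (U j) s" using so_diff[OF vs pm_sub[OF pm]] .

definition T where "T s = {y. (\<forall>i. y i \<in> sp (U i) s) \<and> (\<exists>m. \<forall>i\<ge>m. y (Suc i) = g i s (y i))}"
definition N where "N s = {y. (\<forall>i. y i \<in> sp (U i) s) \<and> (\<exists>m. \<forall>i\<ge>m. y i = 0)}"

lemma N_I: "(\<And>i. y i \<in> sp (U i) s) \<Longrightarrow> (\<And>i. i \<ge> m \<Longrightarrow> y i = 0) \<Longrightarrow> y \<in> N s"
  by (auto simp: N_def)

lemma T_I: "(\<And>i. y i \<in> sp (U i) s) \<Longrightarrow> (\<And>i. i \<ge> m \<Longrightarrow> y (Suc i) = g i s (y i)) \<Longrightarrow> y \<in> T s"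
  by (auto simp: T_def)

lemma T_sub: "subspace_of fs (T s)"
  unfolding subspace_of_def
proof (intro conjI ballI allI)
  show "0 \<in> T s" by (auto simp: T_def fun_zero_apply sub0 g_0)
  fix x y assume x: "x \<in> T s" and y: "y \<in> T s"
  then obtain m1 m2 where m1: "\<forall>i\<ge>m1. x (Suc i) = g i s (x i)" and m2: "\<forall>i\<ge>m2. y (Suc i) = g i s (y i)"
    by (auto simp: T_def)
  have "\<forall>i\<ge>max m1 m2. (x + y) (Suc i) = g i s ((x + y) i)"
    using m1 m2 x y by (auto simp: fun_add_apply T_def g_add)
  then show "x + y \<in> T s" using x y by (intro T_I[of _ _ "max m1 m2"]) (auto simp: T_def fun_add_apply subadd)
next
  fix c x assume x: "x \<in> T s"
  then obtain m1 where m1: "\<forall>i\<ge>m1. x (Suc i) = g i s (x i)" by (auto simp: T_def)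
  then have "\<forall>i\<ge>m1. fs c x (Suc i) = g i s (fs c x i)" using x by (auto simp: fs_apply T_def g_scale)
  then show "fs c x \<in> T s" using x by (auto simp: T_def fs_apply subscale)
qed

lemma N_sub: "subspace_of fs (N s)"
  unfolding subspace_of_def
proof (intro conjI ballI allI)
  show "0 \<in> N s" by (auto simp: N_def fun_zero_apply sub0)
  fix x y assume x: "x \<in> N s" and y: "y \<in> N s"
  then obtain m1 m2 where m1: "\<forall>i\<ge>m1. x i = 0" and m2: "\<forall>i\<ge>m2. y i = 0"
    by (auto simp: N_def)
  have "\<forall>i\<ge>max m1 m2. (x + y) i = 0" using m1 m2 by (auto simp: fun_add_apply)
  then show "x + y \<in> N s" using x y by (intro N_I[of _ _ "max m1 m2"]) (auto simp: N_def fun_add_apply subadd)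
next
  fix c x assume x: "x \<in> N s"
  then obtain m1 where m1: "\<forall>i\<ge>m1. x i = 0" by (auto simp: N_def)
  then have "\<forall>i\<ge>m1. fs c x i = 0" by (auto simp: fs_apply sc0)
  then show "fs c x \<in> N s" using x by (auto simp: N_def fs_apply subscale)
qed

lemma N_T: "N s \<subseteq> T s"
proof
  fix y assume "y \<in> N s"
  then obtain m where m: "\<forall>i\<ge>m. y i = 0" and y: "\<forall>i. y i \<in> sp (U i) s" by (auto simp: N_def)
  then have "\<forall>i\<ge>m. y (Suc i) = g i s (y i)" by (simp add: g_0)
  then show "y \<in> T s" using y by (auto simp: T_def)
qed

definition P where "P s = (SOME P. Vector_Spaces.linear fs fs P \<and> (\<forall>x\<in>N s. P x = 0) \<and> (\<forall>x\<in>T s. P x \<in> T s \<and> x - P x \<in> N s))"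

lemma P_props: "Vector_Spaces.linear fs fs (P s) \<and> (\<forall>x\<in>N s. P s x = 0) \<and> (\<forall>x\<in>T s. P s x \<in> T s \<and> x - P s x \<in> N s)"
proof -
  have "\<exists>P. Vector_Spaces.linear fs fs P \<and> (\<forall>x\<in>N s. P x = 0) \<and> (\<forall>x\<in>T s. P x \<in> T s \<and> x - P x \<in> N s)"
    by (rule projection_exists[OF vsf]) (use N_sub T_sub N_T subspace_of_iff[OF vsf] in auto)
  then show ?thesis unfolding P_def by (rule someI_ex)
qed

lemma P_lin: "Vector_Spaces.linear fs fs (P s)" using P_props by blast
lemma P_N: "x \<in> N s \<Longrightarrow> P s x = 0" using P_props by blast
lemma P_T: "x \<in> T s \<Longrightarrow> P s x \<in> T s" using P_props by blast
lemma P_res: "x \<in> T s \<Longrightarrow> x - P s x \<in> N s" using P_props by blast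
lemma P_add: "P s (x + y) = P s x + P s y"
  using P_lin by (simp add: Vector_Spaces.linear_iff)
lemma P_scale: "P s (fs c x) = fs c (P s x)"
  using P_lin by (simp add: Vector_Spaces.linear_iff)
lemma P_diff: "P s (x - y) = P s x - P s y"
  by (metis P_add add_diff_cancel_right' diff_add_cancel)
lemma P_0: "P s 0 = 0" using P_diff[of s 0 0] by simp

lemma T_diff: "x \<in> T s \<Longrightarrow> y \<in> T s \<Longrightarrow> x - y \<in> T s" using so_diff[OF vsf T_sub] .
lemma N_diff: "x \<in> N s \<Longrightarrow> y \<in> N s \<Longrightarrow> x - y \<in> N s" using so_diff[OF vsf N_sub] .

lemma P_eqmod: "x - y \<in> N s \<Longrightarrow> P s x = P s y"
  using P_N P_diff by fastforce

lemma P_idem: "x \<in> T s \<Longrightarrow> P s (P s x) = P s x"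
proof -
  assume x: "x \<in> T s"
  have "P s x - x \<in> N s" using so_neg[OF vsf N_sub P_res[OF x]] by simp
  then show ?thesis by (rule P_eqmod)
qed

lemma T_in: "y \<in> T s \<Longrightarrow> y i \<in> sp (U i) s" by (auto simp: T_def)

end

context colim_setup begin

lemma st_in: "x \<in> sp (U j) s \<Longrightarrow> seq_trans g j d s x \<in> sp (U (j + d)) s"
  by (induct d) (auto intro: g_in)

lemma st_add: "x \<in> sp (U j) s \<Longrightarrow> y \<in> sp (U j) s \<Longrightarrow>
   seq_trans g j d s (x + y) = seq_trans g j d s x + seq_trans g j d s y"
  by (induct d) (auto simp: g_add st_in)

lemma st_scale: "x \<in> sp (U j) s \<Longrightarrow> seq_trans g j d s (sc c x) = sc c (seq_trans g j d s x)"
  by (induct d) (auto simp: g_scale st_in)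

lemma st_0: "seq_trans g j d s 0 = 0"
  by (induct d) (auto simp: g_0)

lemma st_nat: "s \<le> t \<Longrightarrow> x \<in> sp (U j) s \<Longrightarrow>
   seq_trans g j d t (mp (U j) s t x) = mp (U (j + d)) s t (seq_trans g j d s x)"
  by (induct d) (auto simp: g_nat st_in)

lemma st_shift: "seq_trans g (Suc j) d s (g j s x) = seq_trans g j (Suc d) s x"
  by (induct d) auto

definition thr where "thr j s x = (\<lambda>i. if i < j then 0 else seq_trans g j (i - j) s x)"

lemma thr_in: "x \<in> sp (U j) s \<Longrightarrow> thr j s x i \<in> sp (U i) s"
  using st_in[of x j s "i - j"] by (auto simp: thr_def sub0)

lemma thr_step: "j \<le> i \<Longrightarrow> thr j s x (Suc i) = g i s (thr j s x i)"
  by (auto simp: thr_def Suc_diff_le)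

lemma thr_T: "x \<in> sp (U j) s \<Longrightarrow> thr j s x \<in> T s"
  by (rule T_I[of _ _ j]) (auto simp: thr_in thr_step)

lemma thr_add: "x \<in> sp (U j) s \<Longrightarrow> y \<in> sp (U j) s \<Longrightarrow> thr j s (x + y) = thr j s x + thr j s y"
  by (auto simp: thr_def fun_eq_iff fun_add_apply st_add)

lemma thr_scale: "x \<in> sp (U j) s \<Longrightarrow> thr j s (sc c x) = fs c (thr j s x)"
  by (auto simp: thr_def fun_eq_iff fs_apply st_scale sc0)

definition M where "M s t y = (\<lambda>i. mp (U i) s t (y i))"

lemma thr_nat: "s \<le> t \<Longrightarrow> x \<in> sp (U j) s \<Longrightarrow> M s t (thr j s x) = thr j t (mp (U j) s t x)"
  by (auto simp: thr_def M_def fun_eq_iff st_nat pm_zero[OF pm])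

lemma M_T: "s \<le> t \<Longrightarrow> y \<in> T s \<Longrightarrow> M s t y \<in> T t"
proof -
  assume st: "s \<le> t" and y: "y \<in> T s"
  then obtain m where m: "\<forall>i\<ge>m. y (Suc i) = g i s (y i)" by (auto simp: T_def)
  show ?thesis
  proof (rule T_I[of _ _ m])
    show "M s t y i \<in> sp (U i) t" for i using pm_in[OF pm st T_in[OF y]] by (simp add: M_def)
    show "M s t y (Suc i) = g i t (M s t y i)" if "m \<le> i" for i
      using m that g_nat[OF st T_in[OF y]] by (simp add: M_def)
  qed
qed

lemma M_N: "s \<le> t \<Longrightarrow> y \<in> N s \<Longrightarrow> M s t y \<in> N t"
proof -
  assume st: "s \<le> t" and y: "y \<in> N s"
  then obtain m where m: "\<forall>i\<ge>m. y i = 0" and yi: "\<forall>i. y i \<in> sp (U i) s" by (auto simp: N_def)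
  show ?thesis
  proof (rule N_I[of _ _ m])
    show "M s t y i \<in> sp (U i) t" for i using pm_in[OF pm st] yi by (simp add: M_def)
    show "M s t y i = 0" if "m \<le> i" for i using m that pm_zero[OF pm st] by (simp add: M_def)
  qed
qed

lemma M_add: "s \<le> t \<Longrightarrow> y \<in> T s \<Longrightarrow> z \<in> T s \<Longrightarrow> M s t (y + z) = M s t y + M s t z"
  by (auto simp: M_def fun_eq_iff fun_add_apply pm_add[OF pm] T_in)

lemma M_scale: "s \<le> t \<Longrightarrow> y \<in> T s \<Longrightarrow> M s t (fs c y) = fs c (M s t y)"
  by (auto simp: M_def fun_eq_iff fs_apply pm_scale[OF pm] T_in)

lemma M_diff: "s \<le> t \<Longrightarrow> y \<in> T s \<Longrightarrow> z \<in> T s \<Longrightarrow> M s t (y - z) = M s t y - M s t z"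
proof -
  assume st: "s \<le> t" and y: "y \<in> T s" and z: "z \<in> T s"
  have "M s t ((y - z) + z) = M s t (y - z) + M s t z" using M_add[OF st T_diff[OF y z] z] .
  then show ?thesis by simp
qed

lemma M_id: "y \<in> T s \<Longrightarrow> M s s y = y"
  by (auto simp: M_def fun_eq_iff pm_id[OF pm] T_in)

lemma M_comp: "s \<le> t \<Longrightarrow> t \<le> u \<Longrightarrow> y \<in> T s \<Longrightarrow> M t u (M s t y) = M s u y"
  by (auto simp: M_def fun_eq_iff pm_comp[OF pm] T_in)

definition Vc :: "('n, nat \<Rightarrow> 'v) pmod" where
  "Vc = \<lparr> sp = (\<lambda>s. P s ` T s), mp = (\<lambda>s t y. P t (M s t y)) \<rparr>"

definition iota where "iota j s x = P s (thr j s x)"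

lemma Vsp: "sp Vc s = P s ` T s" by (simp add: Vc_def)
lemma Vmp: "mp Vc s t y = P t (M s t y)" by (simp add: Vc_def)

lemma Vsp_T: "y \<in> sp Vc s \<Longrightarrow> y \<in> T s" using P_T by (auto simp: Vsp)
lemma Vsp_P: "y \<in> sp Vc s \<Longrightarrow> P s y = y" using P_idem by (auto simp: Vsp)

lemma PM_P: "s \<le> t \<Longrightarrow> w \<in> T s \<Longrightarrow> P t (M s t (P s w)) = P t (M s t w)"
proof -
  assume st: "s \<le> t" and w: "w \<in> T s"
  have "P s w - w \<in> N s" using so_neg[OF vsf N_sub P_res[OF w]] by simp
  then have "M s t (P s w - w) \<in> N t" by (rule M_N[OF st])
  then have "M s t (P s w) - M s t w \<in> N t" using M_diff[OF st P_T[OF w] w] by simp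
  then show ?thesis by (rule P_eqmod)
qed

lemma V_pmod: "is_pmod fs Vc"
  unfolding is_pmod_def
proof (intro conjI allI impI ballI)
  fix s
  show "subspace_of fs (sp Vc s)"
    unfolding subspace_of_def Vsp
  proof (intro conjI ballI allI)
    show "0 \<in> P s ` T s" using P_0 so_0[OF T_sub] by (metis image_eqI)
    fix x y assume "x \<in> P s ` T s" "y \<in> P s ` T s"
    then obtain a b where "a \<in> T s" "b \<in> T s" "x = P s a" "y = P s b" by auto
    then show "x + y \<in> P s ` T s" using P_add so_add[OF T_sub] by (metis image_eqI)
  next
    fix c x assume "x \<in> P s ` T s"
    then obtain a where "a \<in> T s" "x = P s a" by auto
    then show "fs c x \<in> P s ` T s" using P_scale so_scale[OF T_sub] by (metis image_eqI)
  qed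
next
  fix s t :: "real^'n" assume st: "s \<le> t"
  show "lin_on fs fs (sp Vc s) (sp Vc t) (mp Vc s t)"
    unfolding lin_on_def
  proof (intro conjI ballI allI)
    fix x assume "x \<in> sp Vc s"
    then show "mp Vc s t x \<in> sp Vc t" using M_T[OF st Vsp_T] by (simp add: Vmp Vsp)
  next
    fix x y assume "x \<in> sp Vc s" "y \<in> sp Vc s"
    then show "mp Vc s t (x + y) = mp Vc s t x + mp Vc s t y"
      using M_add[OF st Vsp_T Vsp_T] by (simp add: Vmp P_add)
  next
    fix c x assume "x \<in> sp Vc s"
    then show "mp Vc s t (fs c x) = fs c (mp Vc s t x)"
      using M_scale[OF st Vsp_T] by (simp add: Vmp P_scale)
  qed
next
  fix s x assume "x \<in> sp Vc s"
  then show "mp Vc s s x = x" using M_id[OF Vsp_T] Vsp_P by (simp add: Vmp)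
next
  fix s t u x assume st: "s \<le> t" and tu: "t \<le> u" and x: "x \<in> sp Vc s"
  have xT: "x \<in> T s" using Vsp_T[OF x] .
  have "P u (M t u (P t (M s t x))) = P u (M t u (M s t x))"
    by (rule PM_P[OF tu M_T[OF st xT]])
  also have "\<dots> = P u (M s u x)" using M_comp[OF st tu xT] by simp
  finally show "mp Vc t u (mp Vc s t x) = mp Vc s u x" by (simp add: Vmp)
qed

lemma thread_eq: assumes "y \<in> T s" "\<forall>i\<ge>m. y (Suc i) = g i s (y i)" "m \<le> i" shows "thr m s (y m) i = y i"
  using assms(3)
proof (induct i rule: dec_induct)
  case base then show ?case by (simp add: thr_def)
next
  case (step i) then show ?case using assms(2) by (simp add: thr_step)
qed

lemma iota_morph: "morph sc fs 0 (U j) Vc (iota j)"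
  unfolding morph_def
proof (intro conjI allI impI ballI)
  fix s
  show "lin_on sc fs (sp (U j) s) (sp Vc (sh 0 s)) (iota j s)"
    unfolding lin_on_def
    by (auto simp: iota_def Vsp thr_T thr_add thr_scale P_add P_scale)
next
  fix s t :: "real^'n" and x assume st: "s \<le> t" and x: "x \<in> sp (U j) s"
  have "mp Vc s t (iota j s x) = P t (M s t (thr j s x))"
    unfolding iota_def Vmp by (rule PM_P[OF st thr_T[OF x]])
  also have "\<dots> = iota j t (mp (U j) s t x)" using thr_nat[OF st x] by (simp add: iota_def)
  finally show "iota j t (mp (U j) s t x) = mp Vc (sh 0 s) (sh 0 t) (iota j s x)" by simp
qed

lemma colim: "is_seq_colim sc fs U g Vc iota"
  unfolding is_seq_colim_def
proof (intro conjI allI ballI impI)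
  fix j show "morph sc sc 0 (U j) (U (Suc j)) (g j)" by (rule gm)
  show "morph sc fs 0 (U j) Vc (iota j)" by (rule iota_morph)
next
  fix j s x assume x: "x \<in> sp (U j) s"
  have "thr (Suc j) s (g j s x) - thr j s x \<in> N s"
  proof (rule N_I[of _ _ "Suc j"])
    show "(thr (Suc j) s (g j s x) - thr j s x) i \<in> sp (U i) s" for i
      using subdiff[OF thr_in[OF g_in[OF x]] thr_in[OF x]] by simp
    show "(thr (Suc j) s (g j s x) - thr j s x) i = 0" if "Suc j \<le> i" for i
      using that st_shift[of j "i - Suc j" s x] by (simp add: thr_def Suc_diff_Suc)
  qed
  then show "iota (Suc j) s (g j s x) = iota j s x" unfolding iota_def by (rule P_eqmod)
next
  fix s y assume y: "y \<in> sp Vc s"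
  have yT: "y \<in> T s" by (rule Vsp_T[OF y])
  then obtain m where m: "\<forall>i\<ge>m. y (Suc i) = g i s (y i)" by (auto simp: T_def)
  have "thr m s (y m) - y \<in> N s"
  proof (rule N_I[of _ _ m])
    show "(thr m s (y m) - y) i \<in> sp (U i) s" for i
      using subdiff[OF thr_in[OF T_in[OF yT]] T_in[OF yT]] by simp
    show "(thr m s (y m) - y) i = 0" if "m \<le> i" for i
      using thread_eq[OF yT m that] by simp
  qed
  then have "iota m s (y m) = P s y" unfolding iota_def by (rule P_eqmod)
  then have "iota m s (y m) = y" using Vsp_P[OF y] by simp
  then show "\<exists>j. \<exists>x\<in>sp (U j) s. iota j s x = y" using T_in[OF yT] by blast
next
  fix j s x assume x: "x \<in> sp (U j) s" and z: "iota j s x = 0"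
  have "thr j s x - P s (thr j s x) \<in> N s" by (rule P_res[OF thr_T[OF x]])
  then have "thr j s x \<in> N s" using z by (simp add: iota_def)
  then obtain m where m: "\<forall>i\<ge>m. thr j s x i = 0" by (auto simp: N_def)
  then have "thr j s x (max m j) = 0" by simp
  then have "seq_trans g j (max m j - j) s x = 0" by (simp add: thr_def)
  then show "\<exists>d. seq_trans g j d s x = 0" by blast
qed

end

fun bk :: "(nat \<Rightarrow> real^'n::finite \<Rightarrow> 'v \<Rightarrow> 'v) \<Rightarrow> (nat \<Rightarrow> real) \<Rightarrow> nat \<Rightarrow> nat \<Rightarrow> real^'n \<Rightarrow> 'v \<Rightarrow> 'v" where
  "bk k \<delta> j 0 s z = z"
| "bk k \<delta> j (Suc d) s z = bk k \<delta> j d (sh (\<delta> (j + d)) s) (k (j + d) s z)"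

context colim_setup begin
lemma thread_agree:
  assumes a: "\<forall>i\<ge>m. a (Suc i) = g i t (a i)" and b: "\<forall>i\<ge>m. b (Suc i) = g i t (b i)"
    and e: "a m = b m" and i: "m \<le> i"
  shows "a i = b i"
  using i
proof (induct i rule: dec_induct)
  case base then show ?case using e .
next
  case (step i) then show ?case using a b by simp
qed
end

locale colim_back = colim_setup sc U g
  for sc :: "'k::field \<Rightarrow> 'v::ab_group_add \<Rightarrow> 'v"
    and U :: "nat \<Rightarrow> ('n::finite, 'v) pmod"
    and g :: "nat \<Rightarrow> real^'n \<Rightarrow> 'v \<Rightarrow> 'v" +
  fixes k :: "nat \<Rightarrow> real^'n \<Rightarrow> 'v \<Rightarrow> 'v" and \<delta> :: "nat \<Rightarrow> real" and j0 :: nat and R :: real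
  assumes \<delta>nn: "\<And>j. 0 \<le> \<delta> j"
    and km: "\<And>j. morph sc sc (\<delta> j) (U (Suc j)) (U j) (k j)"
    and kg: "\<And>j s x. x \<in> sp (U j) s \<Longrightarrow> k j s (g j s x) = mp (U j) s (sh (\<delta> j) s) x"
    and gk: "\<And>j s y. y \<in> sp (U (Suc j)) s \<Longrightarrow> g j (sh (\<delta> j) s) (k j s y) = mp (U (Suc j)) s (sh (\<delta> j) s) y"
    and Rb: "\<And>d. (\<Sum>i<d. \<delta> (j0 + i)) \<le> R"
begin

definition D where "D d = (\<Sum>i<d. \<delta> (j0 + i))"

lemma D_0[simp]: "D 0 = 0" by (simp add: D_def)
lemma D_Suc: "D (Suc d) = \<delta> (j0 + d) + D d" by (simp add: D_def)
lemma D_nn: "0 \<le> D d" unfolding D_def by (rule sum_nonneg) (simp add: \<delta>nn)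
lemma D_R: "D d \<le> R" unfolding D_def by (rule Rb)
lemma R_nn: "0 \<le> R" using D_nn D_R by (meson order_trans)

abbreviation "B \<equiv> bk k \<delta> j0"

lemma bk_in: "z \<in> sp (U (j0 + d)) s \<Longrightarrow> B d s z \<in> sp (U j0) (sh (D d) s)"
proof (induct d arbitrary: s z)
  case 0 then show ?case by simp
next
  case (Suc d)
  have "k (j0 + d) s z \<in> sp (U (j0 + d)) (sh (\<delta> (j0 + d)) s)"
    using morph_in[OF km, of z "j0 + d" s] Suc.prems by simp
  from Suc.hyps[OF this] show ?case by (simp add: D_Suc)
qed

lemma bk_add: "z \<in> sp (U (j0 + d)) s \<Longrightarrow> w \<in> sp (U (j0 + d)) s \<Longrightarrow> B d s (z + w) = B d s z + B d s w"
proof (induct d arbitrary: s z w)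
  case 0 then show ?case by simp
next
  case (Suc d)
  have zw: "z \<in> sp (U (Suc (j0 + d))) s" "w \<in> sp (U (Suc (j0 + d))) s" using Suc.prems by auto
  show ?case using Suc.hyps[OF morph_in[OF km zw(1)] morph_in[OF km zw(2)]] morph_add[OF km zw]
    by simp
qed

lemma bk_scale: "z \<in> sp (U (j0 + d)) s \<Longrightarrow> B d s (sc c z) = sc c (B d s z)"
proof (induct d arbitrary: s z)
  case 0 then show ?case by simp
next
  case (Suc d)
  have z: "z \<in> sp (U (Suc (j0 + d))) s" using Suc.prems by auto
  show ?case using Suc.hyps[OF morph_in[OF km z]] morph_scale[OF km z] by simp
qed

lemma bk_0: "B d s 0 = 0"
proof (induct d arbitrary: s)
  case 0 then show ?case by simp
next
  case (Suc d)
  have "k (j0 + d) s 0 = 0" using lin_0[OF morph_lin[OF km] pm_sub[OF pm]] by blast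
  then show ?case using Suc by simp
qed

lemma bk_nat: "s \<le> t \<Longrightarrow> z \<in> sp (U (j0 + d)) s \<Longrightarrow>
   B d t (mp (U (j0 + d)) s t z) = mp (U j0) (sh (D d) s) (sh (D d) t) (B d s z)"
proof (induct d arbitrary: s t z)
  case 0 then show ?case by simp
next
  case (Suc d)
  have z: "z \<in> sp (U (Suc (j0 + d))) s" using Suc.prems by auto
  have "k (j0 + d) t (mp (U (Suc (j0 + d))) s t z) = mp (U (j0 + d)) (sh (\<delta> (j0 + d)) s) (sh (\<delta> (j0 + d)) t) (k (j0 + d) s z)"
    using morph_nat[OF km Suc.prems(1) z] .
  then show ?case
    using Suc.hyps[OF sh_mono[OF Suc.prems(1)] morph_in[OF km z]] by (simp add: D_Suc)
qed

lemma bk_st: "x \<in> sp (U j0) s \<Longrightarrow> B d s (seq_trans g j0 d s x) = mp (U j0) s (sh (D d) s) x"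
proof (induct d arbitrary: s x)
  case 0 then show ?case by (simp add: pm_id[OF pm])
next
  case (Suc d)
  let ?e = "\<delta> (j0 + d)"
  have st: "seq_trans g j0 d s x \<in> sp (U (j0 + d)) s" using st_in[OF Suc.prems] .
  have le: "s \<le> sh ?e s" by (rule le_sh[OF \<delta>nn])
  have "B (Suc d) s (seq_trans g j0 (Suc d) s x) = B d (sh ?e s) (k (j0 + d) s (g (j0 + d) s (seq_trans g j0 d s x)))"
    by simp
  also have "\<dots> = B d (sh ?e s) (mp (U (j0 + d)) s (sh ?e s) (seq_trans g j0 d s x))"
    using kg[OF st] by simp
  also have "\<dots> = B d (sh ?e s) (seq_trans g j0 d (sh ?e s) (mp (U j0) s (sh ?e s) x))"
    using st_nat[OF le Suc.prems] by simp
  also have "\<dots> = mp (U j0) (sh ?e s) (sh (D d) (sh ?e s)) (mp (U j0) s (sh ?e s) x)"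
    using Suc.hyps[OF pm_in[OF pm le Suc.prems]] .
  also have "\<dots> = mp (U j0) s (sh (D (Suc d)) s) x"
  proof -
    have "sh 0 (sh ?e s) \<le> sh (D d) (sh ?e s)" by (rule sh_le[OF D_nn])
    then show ?thesis using pm_comp[OF pm le _ Suc.prems, of "sh (D d) (sh ?e s)"]
      by (simp add: D_Suc)
  qed
  finally show ?case .
qed

lemma st_bk: "z \<in> sp (U (j0 + d)) s \<Longrightarrow>
   seq_trans g j0 d (sh (D d) s) (B d s z) = mp (U (j0 + d)) s (sh (D d) s) z"
proof (induct d arbitrary: s z)
  case 0 then show ?case by (simp add: pm_id[OF pm])
next
  case (Suc d)
  let ?e = "\<delta> (j0 + d)"
  let ?s' = "sh ?e s"
  let ?t = "sh (D (Suc d)) s"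
  have z: "z \<in> sp (U (Suc (j0 + d))) s" using Suc.prems by auto
  have kz: "k (j0 + d) s z \<in> sp (U (j0 + d)) ?s'" using morph_in[OF km z] .
  have t: "sh (D d) ?s' = ?t" by (simp add: D_Suc)
  have le1: "s \<le> ?s'" by (rule le_sh[OF \<delta>nn])
  have "sh 0 ?s' \<le> sh (D d) ?s'" by (rule sh_le[OF D_nn])
  then have le2: "?s' \<le> ?t" using t by simp
  have "seq_trans g j0 (Suc d) ?t (B (Suc d) s z) = g (j0 + d) ?t (seq_trans g j0 d ?t (B d ?s' (k (j0 + d) s z)))"
    by simp
  also have "\<dots> = g (j0 + d) ?t (mp (U (j0 + d)) ?s' ?t (k (j0 + d) s z))"
    using Suc.hyps[OF kz] t by simp
  also have "\<dots> = mp (U (Suc (j0 + d))) ?s' ?t (g (j0 + d) ?s' (k (j0 + d) s z))"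
    using g_nat[OF le2 kz] .
  also have "\<dots> = mp (U (Suc (j0 + d))) ?s' ?t (mp (U (Suc (j0 + d))) s ?s' z)"
    using gk[OF z] by simp
  also have "\<dots> = mp (U (Suc (j0 + d))) s ?t z"
    using pm_comp[OF pm le1 le2 z] .
  finally show ?case by simp
qed

end

context colim_back begin

definition tf where "tf y s m \<longleftrightarrow> (\<forall>i\<ge>m. y (Suc i) = g i s (y i))"

definition Gd where "Gd d s y = mp (U j0) (sh (D d) s) (sh R s) (B d s (y (j0 + d)))"

definition GT where "GT s y = Gd (SOME d. tf y s (j0 + d)) s y"

lemma tf_mono: "tf y s m \<Longrightarrow> m \<le> m' \<Longrightarrow> tf y s m'" by (auto simp: tf_def)

lemma T_tf: "y \<in> T s \<Longrightarrow> \<exists>d. tf y s (j0 + d)"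
  by (auto simp: T_def tf_def) (metis le_add2 order_trans)

lemma shD_le: "sh (D d) s \<le> sh (D (d + e)) s"
proof -
  have "D d \<le> D (d + e)" unfolding D_def by (rule sum_mono2) (auto simp: \<delta>nn)
  then show ?thesis by (rule sh_le)
qed

lemma shDR: "sh (D d) s \<le> sh R s" by (rule sh_le[OF D_R])

lemma Gd_in: "y \<in> T s \<Longrightarrow> Gd d s y \<in> sp (U j0) (sh R s)"
  unfolding Gd_def by (rule pm_in[OF pm shDR bk_in[OF T_in]])

lemma Gd_step: assumes y: "y \<in> T s" and tf: "tf y s (j0 + d)" shows "Gd (Suc d) s y = Gd d s y"
proof -
  let ?e = "\<delta> (j0 + d)"
  have yd: "y (j0 + d) \<in> sp (U (j0 + d)) s" by (rule T_in[OF y])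
  have le: "s \<le> sh ?e s" by (rule le_sh[OF \<delta>nn])
  have ys: "y (j0 + Suc d) = g (j0 + d) s (y (j0 + d))" using tf by (simp add: tf_def)
  have "B (Suc d) s (y (j0 + Suc d)) = B d (sh ?e s) (mp (U (j0 + d)) s (sh ?e s) (y (j0 + d)))"
    using ys kg[OF yd] by simp
  also have "\<dots> = mp (U j0) (sh (D d) s) (sh (D (Suc d)) s) (B d s (y (j0 + d)))"
    using bk_nat[OF le yd] by (simp add: D_Suc)
  finally have "Gd (Suc d) s y = mp (U j0) (sh (D (Suc d)) s) (sh R s) (mp (U j0) (sh (D d) s) (sh (D (Suc d)) s) (B d s (y (j0 + d))))"
    by (simp add: Gd_def)
  also have "\<dots> = Gd d s y"
    unfolding Gd_def using pm_comp[OF pm shD_le[of d s 1, simplified] shDR bk_in[OF yd]] by simp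
  finally show ?thesis .
qed

lemma Gd_indep: assumes y: "y \<in> T s" and tf: "tf y s (j0 + d)" shows "Gd (d + e) s y = Gd d s y"
proof (induct e)
  case 0 then show ?case by simp
next
  case (Suc e)
  have "tf y s (j0 + (d + e))" using tf_mono[OF tf] by simp
  then show ?case using Gd_step[OF y] Suc by simp
qed

lemma GT_eq: assumes y: "y \<in> T s" and tf: "tf y s (j0 + d)" shows "GT s y = Gd d s y"
proof -
  define d' where "d' = (SOME d. tf y s (j0 + d))"
  have tf': "tf y s (j0 + d')" unfolding d'_def using T_tf[OF y] by (rule someI_ex)
  have "Gd (d' + (max d d' - d')) s y = Gd d' s y" by (rule Gd_indep[OF y tf'])
  moreover have "Gd (d + (max d d' - d)) s y = Gd d s y" by (rule Gd_indep[OF y tf])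
  ultimately show ?thesis unfolding GT_def d'_def[symmetric] by simp
qed

lemma GT_in: "y \<in> T s \<Longrightarrow> GT s y \<in> sp (U j0) (sh R s)"
  using T_tf GT_eq Gd_in by metis

lemma tf_add: "tf y s m \<Longrightarrow> tf z s m \<Longrightarrow> y \<in> T s \<Longrightarrow> z \<in> T s \<Longrightarrow> tf (y + z) s m"
  by (auto simp: tf_def fun_add_apply g_add T_in)

lemma GT_add: assumes y: "y \<in> T s" and z: "z \<in> T s" shows "GT s (y + z) = GT s y + GT s z"
proof -
  obtain d1 d2 where "tf y s (j0 + d1)" "tf z s (j0 + d2)" using T_tf[OF y] T_tf[OF z] by blast
  then have t1: "tf y s (j0 + max d1 d2)" and t2: "tf z s (j0 + max d1 d2)" by (auto elim: tf_mono)
  have yz: "y + z \<in> T s" using so_add[OF T_sub y z] .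
  have "GT s (y + z) = Gd (max d1 d2) s (y + z)" by (rule GT_eq[OF yz tf_add[OF t1 t2 y z]])
  also have "\<dots> = Gd (max d1 d2) s y + Gd (max d1 d2) s z"
    unfolding Gd_def fun_add_apply
    using bk_add[OF T_in[OF y] T_in[OF z]] pm_add[OF pm shDR bk_in[OF T_in[OF y]] bk_in[OF T_in[OF z]]]
    by simp
  finally show ?thesis using GT_eq[OF y t1] GT_eq[OF z t2] by simp
qed

lemma GT_scale: assumes y: "y \<in> T s" shows "GT s (fs c y) = sc c (GT s y)"
proof -
  obtain d where t: "tf y s (j0 + d)" using T_tf[OF y] by blast
  have t': "tf (fs c y) s (j0 + d)" using t y by (auto simp: tf_def fs_apply g_scale T_in)
  have yc: "fs c y \<in> T s" using so_scale[OF T_sub y] .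
  show ?thesis using GT_eq[OF yc t'] GT_eq[OF y t]
    unfolding Gd_def fs_apply
    using bk_scale[OF T_in[OF y]] pm_scale[OF pm shDR bk_in[OF T_in[OF y]]] by simp
qed

lemma GT_diff: "y \<in> T s \<Longrightarrow> z \<in> T s \<Longrightarrow> GT s (y - z) = GT s y - GT s z"
  using GT_add[OF T_diff] by (metis add_diff_cancel diff_add_cancel)

lemma GT_N: assumes y: "y \<in> N s" shows "GT s y = 0"
proof -
  have yT: "y \<in> T s" using N_T y by blast
  obtain d where t: "tf y s (j0 + d)" using T_tf[OF yT] by blast
  obtain m where m: "\<forall>i\<ge>m. y i = 0" using y by (auto simp: N_def)
  have t2: "tf y s (j0 + (d + m))" by (rule tf_mono[OF t]) simp
  have "y (j0 + (d + m)) = 0" using m by simp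
  then show ?thesis using GT_eq[OF yT t2] unfolding Gd_def by (simp add: bk_0 pm_zero[OF pm shDR])
qed

lemma GT_P: assumes y: "y \<in> T s" shows "GT s (P s y) = GT s y"
proof -
  have "GT s (y - (y - P s y)) = GT s y - GT s (y - P s y)"
    by (rule GT_diff[OF y]) (use P_res[OF y] N_T in blast)
  then show ?thesis using GT_N[OF P_res[OF y]] by simp
qed

lemma G_morph: "morph fs sc R Vc (U j0) GT"
  unfolding morph_def
proof (intro conjI allI impI ballI)
  fix s
  show "lin_on fs sc (sp Vc s) (sp (U j0) (sh R s)) (GT s)"
    unfolding lin_on_def using GT_in GT_add GT_scale Vsp_T by blast
next
  fix s t :: "real^'n" and y assume st: "s \<le> t" and yV: "y \<in> sp Vc s"
  have y: "y \<in> T s" by (rule Vsp_T[OF yV])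
  obtain d where tfy: "tf y s (j0 + d)" using T_tf[OF y] by blast
  have My: "M s t y \<in> T t" by (rule M_T[OF st y])
  have tfM: "tf (M s t y) t (j0 + d)" using tfy g_nat[OF st T_in[OF y]] by (auto simp: tf_def M_def)
  have yd: "y (j0 + d) \<in> sp (U (j0 + d)) s" by (rule T_in[OF y])
  have "GT t (mp Vc s t y) = GT t (M s t y)" unfolding Vmp by (rule GT_P[OF My])
  also have "\<dots> = Gd d t (M s t y)" by (rule GT_eq[OF My tfM])
  also have "\<dots> = mp (U j0) (sh (D d) t) (sh R t) (mp (U j0) (sh (D d) s) (sh (D d) t) (B d s (y (j0 + d))))"
    unfolding Gd_def using bk_nat[OF st yd] by (simp add: M_def)
  also have "\<dots> = mp (U j0) (sh (D d) s) (sh R t) (B d s (y (j0 + d)))"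
    by (rule pm_comp[OF pm sh_mono[OF st] shDR bk_in[OF yd]])
  also have "\<dots> = mp (U j0) (sh R s) (sh R t) (mp (U j0) (sh (D d) s) (sh R s) (B d s (y (j0 + d))))"
    by (rule pm_comp[OF pm shDR sh_mono[OF st] bk_in[OF yd], symmetric])
  also have "\<dots> = mp (U j0) (sh R s) (sh R t) (GT s y)" using GT_eq[OF y tfy] by (simp add: Gd_def)
  finally show "GT t (mp Vc s t y) = mp (U j0) (sh R s) (sh R t) (GT s y)" .
qed

lemma GT_iota: assumes x: "x \<in> sp (U j0) s" shows "GT s (iota j0 s x) = mp (U j0) s (sh R s) x"
proof -
  have th: "thr j0 s x \<in> T s" by (rule thr_T[OF x])
  have tf: "tf (thr j0 s x) s (j0 + 0)" by (auto simp: tf_def thr_step)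
  have "GT s (iota j0 s x) = GT s (thr j0 s x)" unfolding iota_def by (rule GT_P[OF th])
  also have "\<dots> = Gd 0 s (thr j0 s x)" by (rule GT_eq[OF th tf])
  also have "\<dots> = mp (U j0) s (sh R s) x" by (simp add: Gd_def thr_def)
  finally show ?thesis .
qed

lemma iota_GT: assumes yV: "y \<in> sp Vc s" shows "iota j0 (sh R s) (GT s y) = mp Vc s (sh R s) y"
proof -
  let ?t = "sh R s"
  have y: "y \<in> T s" by (rule Vsp_T[OF yV])
  obtain d where tfy: "tf y s (j0 + d)" using T_tf[OF y] by blast
  have st: "s \<le> ?t" by (rule le_sh[OF R_nn])
  have yd: "y (j0 + d) \<in> sp (U (j0 + d)) s" by (rule T_in[OF y])
  have Gin: "GT s y \<in> sp (U j0) ?t" by (rule GT_in[OF y])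
  have a: "\<forall>i\<ge>j0 + d. thr j0 ?t (GT s y) (Suc i) = g i ?t (thr j0 ?t (GT s y) i)"
    by (auto simp: thr_step)
  have b: "\<forall>i\<ge>j0 + d. M s ?t y (Suc i) = g i ?t (M s ?t y i)"
    using tfy g_nat[OF st T_in[OF y]] by (auto simp: tf_def M_def)
  have e: "thr j0 ?t (GT s y) (j0 + d) = M s ?t y (j0 + d)"
  proof -
    have "thr j0 ?t (GT s y) (j0 + d) = seq_trans g j0 d ?t (mp (U j0) (sh (D d) s) ?t (B d s (y (j0 + d))))"
      using GT_eq[OF y tfy] by (simp add: thr_def Gd_def)
    also have "\<dots> = mp (U (j0 + d)) (sh (D d) s) ?t (seq_trans g j0 d (sh (D d) s) (B d s (y (j0 + d))))"
      by (rule st_nat[OF shDR bk_in[OF yd]])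
    also have "\<dots> = mp (U (j0 + d)) (sh (D d) s) ?t (mp (U (j0 + d)) s (sh (D d) s) (y (j0 + d)))"
      using st_bk[OF yd] by simp
    also have "\<dots> = mp (U (j0 + d)) s ?t (y (j0 + d))"
      using pm_comp[OF pm shD_le[of 0 s d, simplified] shDR yd] by simp
    finally show ?thesis by (simp add: M_def)
  qed
  have "thr j0 ?t (GT s y) - M s ?t y \<in> N ?t"
  proof (rule N_I[of _ _ "j0 + d"])
    show "(thr j0 ?t (GT s y) - M s ?t y) i \<in> sp (U i) ?t" for i
      using subdiff[OF thr_in[OF Gin] T_in[OF M_T[OF st y]]] by simp
    show "(thr j0 ?t (GT s y) - M s ?t y) i = 0" if "j0 + d \<le> i" for i
      using thread_agree[OF a b e that] by simp
  qed
  then show ?thesis unfolding iota_def Vmp by (rule P_eqmod)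
qed

end

lemma sh_eqI: "a = b \<Longrightarrow> sh a s = sh b s" by simp

lemma shift_sp[simp]: "sp (shift_pmod c X) s = sp X (sh c s)" by (simp add: shift_pmod_def)
lemma shift_mp[simp]: "mp (shift_pmod c X) s t = mp X (sh c s) (sh c t)" by (simp add: shift_pmod_def)

lemma shift_pmod_pmod: "is_pmod sc X \<Longrightarrow> is_pmod sc (shift_pmod c X)"
  unfolding is_pmod_def by (auto simp: sh_mono)

lemma morph_shift_gen:
  assumes m: "morph s1 s2 e X Y f" and eq: "c1 + e = e' + c2"
  shows "morph s1 s2 e' (shift_pmod c1 X) (shift_pmod c2 Y) (\<lambda>s. f (sh c1 s))"
proof -
  have p: "sh (c1 + e) s = sh (e' + c2) s" for s by (rule sh_eqI, use eq in linarith)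
  show ?thesis unfolding morph_def
  proof (intro conjI allI impI ballI)
    fix s show "lin_on s1 s2 (sp (shift_pmod c1 X) s) (sp (shift_pmod c2 Y) (sh e' s)) (f (sh c1 s))"
      using morph_lin[OF m, of "sh c1 s"] by (simp add: p)
  next
    fix s t and x assume "s \<le> t" "x \<in> sp (shift_pmod c1 X) s"
    then show "f (sh c1 t) (mp (shift_pmod c1 X) s t x) = mp (shift_pmod c2 Y) (sh e' s) (sh e' t) (f (sh c1 s) x)"
      using morph_nat[OF m sh_mono] by (simp add: p)
  qed
qed

lemma morph_comp:
  assumes m1: "morph s1 s2 a X Y f1" and m2: "morph s2 s3 b Y Z f2"
  shows "morph s1 s3 (a + b) X Z (\<lambda>s x. f2 (sh a s) (f1 s x))"
  unfolding morph_def
proof (intro conjI allI impI ballI)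
  fix s
  show "lin_on s1 s3 (sp X s) (sp Z (sh (a + b) s)) (\<lambda>x. f2 (sh a s) (f1 s x))"
    using morph_lin[OF m1, of s] morph_lin[OF m2, of "sh a s"] by (auto simp: lin_on_def)
next
  fix s t and x assume st: "s \<le> t" and x: "x \<in> sp X s"
  show "f2 (sh a t) (f1 t (mp X s t x)) = mp Z (sh (a + b) s) (sh (a + b) t) (f2 (sh a s) (f1 s x))"
    using morph_nat[OF m1 st x] morph_nat[OF m2 sh_mono[OF st] morph_in[OF m1 x]] by simp
qed

lemma interleaving_comp:
  assumes pX: "is_pmod s1 X" and pZ: "is_pmod s3 Z"
    and i1: "interleaving s1 s2 a X Y f1 g1" and i2: "interleaving s2 s3 b Y Z f2 g2"
  shows "interleaving s1 s3 (a + b) X Z (\<lambda>s x. f2 (sh a s) (f1 s x)) (\<lambda>s z. g1 (sh b s) (g2 s z))"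
proof -
  have a: "0 \<le> a" and b: "0 \<le> b" using i1 i2 by (auto simp: interleaving_def)
  have mf1: "morph s1 s2 a X Y f1" and mg1: "morph s2 s1 a Y X g1" and mf2: "morph s2 s3 b Y Z f2" and mg2: "morph s3 s2 b Z Y g2"
    using i1 i2 by (auto simp: interleaving_def)
  have id1: "\<And>s x. x \<in> sp X s \<Longrightarrow> g1 (sh a s) (f1 s x) = mp X s (sh (2*a) s) x"
   and id1': "\<And>s y. y \<in> sp Y s \<Longrightarrow> f1 (sh a s) (g1 s y) = mp Y s (sh (2*a) s) y"
   and id2: "\<And>s y. y \<in> sp Y s \<Longrightarrow> g2 (sh b s) (f2 s y) = mp Y s (sh (2*b) s) y"
   and id2': "\<And>s z. z \<in> sp Z s \<Longrightarrow> f2 (sh b s) (g2 s z) = mp Z s (sh (2*b) s) z"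
    using i1 i2 by (auto simp: interleaving_def)
  show ?thesis
    unfolding interleaving_def
  proof (intro conjI allI ballI)
    show "0 \<le> a + b" using a b by simp
    show "morph s1 s3 (a + b) X Z (\<lambda>s x. f2 (sh a s) (f1 s x))" by (rule morph_comp[OF mf1 mf2])
    show "morph s3 s1 (a + b) Z X (\<lambda>s z. g1 (sh b s) (g2 s z))"
      using morph_comp[OF mg2 mg1] by (simp add: add.commute)
  next
    fix s x assume x: "x \<in> sp X s"
    let ?w = "f1 s x"
    have w: "?w \<in> sp Y (sh a s)" by (rule morph_in[OF mf1 x])
    have "g2 (sh (a + b) s) (f2 (sh a s) ?w) = mp Y (sh a s) (sh (a + 2*b) s) ?w"
      using id2[OF w] by (simp add: add.commute)
    then have "g1 (sh b (sh (a + b) s)) (g2 (sh (a + b) s) (f2 (sh a s) ?w))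
        = g1 (sh (a + 2*b) s) (mp Y (sh a s) (sh (a + 2*b) s) ?w)" by (simp add: algebra_simps)
    also have "\<dots> = mp X (sh (2*a) s) (sh (2*a + 2*b) s) (g1 (sh a s) ?w)"
      using morph_nat[OF mg1 sh_le[of a "a + 2*b"] w] b by (simp add: algebra_simps)
    also have "\<dots> = mp X (sh (2*a) s) (sh (2*a + 2*b) s) (mp X s (sh (2*a) s) x)"
      using id1[OF x] by simp
    also have "\<dots> = mp X s (sh (2*(a+b)) s) x"
    proof -
      have "s \<le> sh (2*a) s" using a by (intro le_sh) simp
      moreover have "sh (2*a) s \<le> sh (2*a+2*b) s" using b by (intro sh_le) simp
      ultimately show ?thesis using pm_comp[OF pX _ _ x] by (simp add: algebra_simps)
    qed
    finally show "g1 (sh b (sh (a + b) s)) (g2 (sh (a + b) s) (f2 (sh a s) (f1 s x))) = mp X s (sh (2 * (a + b)) s) x"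
      by (simp add: algebra_simps)
  next
    fix s z assume z: "z \<in> sp Z s"
    let ?w = "g2 s z"
    have w: "?w \<in> sp Y (sh b s)" by (rule morph_in[OF mg2 z])
    have "f1 (sh (a + b) s) (g1 (sh b s) ?w) = mp Y (sh b s) (sh (b + 2*a) s) ?w"
      using id1'[OF w] by (simp add: add.commute)
    then have "f2 (sh a (sh (a + b) s)) (f1 (sh (a + b) s) (g1 (sh b s) ?w))
        = f2 (sh (b + 2*a) s) (mp Y (sh b s) (sh (b + 2*a) s) ?w)" by (simp add: algebra_simps)
    also have "\<dots> = mp Z (sh (2*b) s) (sh (2*a + 2*b) s) (f2 (sh b s) ?w)"
      using morph_nat[OF mf2 sh_le[of b "b + 2*a"] w] a by (simp add: algebra_simps)
    also have "\<dots> = mp Z (sh (2*b) s) (sh (2*a + 2*b) s) (mp Z s (sh (2*b) s) z)"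
      using id2'[OF z] by simp
    also have "\<dots> = mp Z s (sh (2*(a+b)) s) z"
    proof -
      have "s \<le> sh (2*b) s" using b by (intro le_sh) simp
      moreover have "sh (2*b) s \<le> sh (2*a+2*b) s" using a by (intro sh_le) simp
      ultimately show ?thesis using pm_comp[OF pZ _ _ z] by (simp add: algebra_simps)
    qed
    finally show "f2 (sh a (sh (a + b) s)) (f1 (sh (a + b) s) (g1 (sh b s) (g2 s z))) = mp Z s (sh (2 * (a + b)) s) z" .
  qed
qed

lemma asym_to_sym:
  assumes r: "0 \<le> r"
    and im: "morph sc1 sc2 0 (shift_pmod (-r) W) V i"
    and Gm: "morph sc2 sc1 (2*r) V (shift_pmod (-r) W) G"
    and a: "\<And>s x. x \<in> sp (shift_pmod (-r) W) s \<Longrightarrow> G s (i s x) = mp (shift_pmod (-r) W) s (sh (2*r) s) x"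
    and b: "\<And>s y. y \<in> sp V s \<Longrightarrow> i (sh (2*r) s) (G s y) = mp V s (sh (2*r) s) y"
  shows "interleaving sc1 sc2 r W V (\<lambda>s x. i (sh r s) x) G"
proof -
  have p0: "sh (-r) (sh r s) = s" for s by simp
  have p1: "sh (-r) (sh (2*r) s) = sh r s" for s by (simp only: sh_sh) (rule sh_eqI, linarith)
  have p2: "sh r (sh r s) = sh (2*r) s" for s by (simp only: sh_sh) (rule sh_eqI, linarith)
  have p3: "sh (-r) (sh (2*r) (sh r s)) = sh (2*r) s" for s by (simp only: sh_sh) (rule sh_eqI, linarith)
  have m1: "morph sc1 sc2 r W V (\<lambda>s x. i (sh r s) x)"
    unfolding morph_def
  proof (intro conjI allI impI ballI)
    fix s show "lin_on sc1 sc2 (sp W s) (sp V (sh r s)) (i (sh r s))"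
      using morph_lin[OF im, of "sh r s"] by (simp del: sh_sh add: p0)
  next
    fix s t and x assume st: "s \<le> t" and x: "x \<in> sp W s"
    show "i (sh r t) (mp W s t x) = mp V (sh r s) (sh r t) (i (sh r s) x)"
    proof -
      have "x \<in> sp (shift_pmod (-r) W) (sh r s)" using x by (simp del: sh_sh add: p0)
      from morph_nat[OF im sh_mono[OF st] this] show ?thesis by (simp del: sh_sh add: p0)
    qed
  qed
  have m2: "morph sc2 sc1 r V W G"
    unfolding morph_def
  proof (intro conjI allI impI ballI)
    fix s show "lin_on sc2 sc1 (sp V s) (sp W (sh r s)) (G s)"
      using morph_lin[OF Gm, of s] by (simp del: sh_sh add: p1)
  next
    fix s t and y assume st: "s \<le> t" and y: "y \<in> sp V s"
    show "G t (mp V s t y) = mp W (sh r s) (sh r t) (G s y)"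
      using morph_nat[OF Gm st y] by (simp del: sh_sh add: p1)
  qed
  show ?thesis unfolding interleaving_def
  proof (intro conjI allI ballI)
    show "0 \<le> r" by fact
    show "morph sc1 sc2 r W V (\<lambda>s x. i (sh r s) x)" by (rule m1)
    show "morph sc2 sc1 r V W G" by (rule m2)
  next
    fix s x assume x: "x \<in> sp W s"
    show "G (sh r s) (i (sh r s) x) = mp W s (sh (2 * r) s) x"
      using a[of x "sh r s"] x by (simp del: sh_sh add: p0 p3)
  next
    fix s y assume y: "y \<in> sp V s"
    show "i (sh r (sh r s)) (G s y) = mp V s (sh (2 * r) s) y"
      using b[OF y] by (simp del: sh_sh add: p2)
  qed
qed

lemma dI_le: "interleaved s1 s2 e X Y \<Longrightarrow> 0 \<le> e \<Longrightarrow> dI s1 s2 X Y \<le> ereal e"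
  unfolding dI_def by (rule Inf_lower) auto

lemma dI_lt: "dI s1 s2 X Y < ereal e \<Longrightarrow> \<exists>e'. 0 \<le> e' \<and> e' < e \<and> interleaved s1 s2 e' X Y"
  unfolding dI_def by (auto simp: Inf_less_iff)

lemma dI_nn: "0 \<le> dI s1 s2 X Y"
  unfolding dI_def by (rule Inf_greatest) auto

theorem lemma4p1:
  fixes sc :: "'k::field \<Rightarrow> 'v::ab_group_add \<Rightarrow> 'v"
    and Vs :: "nat \<Rightarrow> ('n::finite, 'v) pmod"
  assumes vs: "vector_space sc"
    and mods: "\<And>k. is_pmod sc (Vs k)"
    and cauchy: "\<And>e. e > 0 \<Longrightarrow> \<exists>N. \<forall>k\<ge>N. \<forall>m\<ge>N. dI sc sc (Vs k) (Vs m) < ereal e"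
  shows "\<exists>V :: ('n, nat \<Rightarrow> 'v) pmod.
           is_pmod (fun_scale sc) V \<and>
           ((\<lambda>k. dI sc (fun_scale sc) (Vs k) V) \<longlonglongrightarrow> 0) \<and>
           (\<exists>\<phi> \<epsilon> c f \<iota>. strict_mono \<phi> \<and>
              (\<forall>j. \<exists>g. interleaving sc sc (\<epsilon> j) (Vs (\<phi> j)) (Vs (\<phi> (Suc j))) (f j) g) \<and>
              (\<forall>j. c (Suc j) = c j + \<epsilon> j) \<and>
              is_seq_colim sc (fun_scale sc)
                 (\<lambda>j. shift_pmod (c j) (Vs (\<phi> j)))
                 (\<lambda>j s. f j (sh (c j) s))
                 V \<iota>)"
proof -
  define Nf where "Nf e = (SOME N. \<forall>k\<ge>N. \<forall>m\<ge>N. dI sc sc (Vs k) (Vs m) < ereal e)" for e :: real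
  have Nf: "dI sc sc (Vs k) (Vs m) < ereal e" if "e > 0" "k \<ge> Nf e" "m \<ge> Nf e" for e k m
  proof -
    have "\<forall>k\<ge>Nf e. \<forall>m\<ge>Nf e. dI sc sc (Vs k) (Vs m) < ereal e"
      unfolding Nf_def by (rule someI_ex[OF cauchy[OF that(1)]])
    then show ?thesis using that by blast
  qed
  define \<phi> where "\<phi> = rec_nat (Nf 1) (\<lambda>j p. max (Suc p) (Nf ((1/2)^(Suc j))))"
  have \<phi>0: "\<phi> 0 = Nf 1" by (simp add: \<phi>_def)
  have \<phi>S: "\<phi> (Suc j) = max (Suc (\<phi> j)) (Nf ((1/2)^(Suc j)))" for j by (simp add: \<phi>_def)
  have \<phi>N: "Nf ((1/2)^j) \<le> \<phi> j" for j by (cases j) (auto simp: \<phi>0 \<phi>S)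
  have sm\<phi>: "strict_mono \<phi>" unfolding strict_mono_Suc_iff
  proof
    fix n show "\<phi> n < \<phi> (Suc n)" unfolding \<phi>S by (simp add: less_max_iff_disj)
  qed
  have "\<forall>j. \<exists>e. 0 \<le> e \<and> e < (1/2)^j \<and> interleaved sc sc e (Vs (\<phi> j)) (Vs (\<phi> (Suc j)))"
  proof
    fix j
    have "\<phi> j \<le> \<phi> (Suc j)" by (simp add: \<phi>S)
    then have "dI sc sc (Vs (\<phi> j)) (Vs (\<phi> (Suc j))) < ereal ((1/2)^j)"
      using \<phi>N[of j] by (intro Nf) auto
    then show "\<exists>e. 0 \<le> e \<and> e < (1/2)^j \<and> interleaved sc sc e (Vs (\<phi> j)) (Vs (\<phi> (Suc j)))"
      by (rule dI_lt)
  qed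
  then obtain \<epsilon> where \<epsilon>: "\<And>j. 0 \<le> \<epsilon> j" "\<And>j. \<epsilon> j < (1/2)^j"
    and \<epsilon>i: "\<And>j. interleaved sc sc (\<epsilon> j) (Vs (\<phi> j)) (Vs (\<phi> (Suc j)))"
    by metis
  have "\<forall>j. \<exists>p. interleaving sc sc (\<epsilon> j) (Vs (\<phi> j)) (Vs (\<phi> (Suc j))) (fst p) (snd p)"
    using \<epsilon>i unfolding interleaved_def by auto
  then obtain p where p: "\<And>j. interleaving sc sc (\<epsilon> j) (Vs (\<phi> j)) (Vs (\<phi> (Suc j))) (fst (p j)) (snd (p j))"
    by metis
  define f where "f j = fst (p j)" for j
  define h where "h j = snd (p j)" for j
  have fh: "interleaving sc sc (\<epsilon> j) (Vs (\<phi> j)) (Vs (\<phi> (Suc j))) (f j) (h j)" for j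
    using p by (simp add: f_def h_def)

  have sgeo: "summable (\<lambda>i. (1/2::real)^(i + j))" for j
    by (simp add: power_add summable_mult2)
  have sm: "summable (\<lambda>i. \<epsilon> (i + j))" for j
    by (rule summable_comparison_test'[OF sgeo[of j], of 0]) (use \<epsilon> in \<open>auto intro: less_imp_le\<close>)
  define c where "c j = - (\<Sum>i. \<epsilon> (i + j))" for j
  have cS: "c (Suc j) = c j + \<epsilon> j" for j
    using suminf_split_head[OF sm[of j]] by (simp add: c_def)
  have c_le0: "c j \<le> 0" for j
    using suminf_nonneg[OF sm[of j]] \<epsilon>(1) by (simp add: c_def)
  have c_bd: "- c j \<le> 2 * (1/2)^j" for j
  proof -
    have "(\<Sum>i. \<epsilon> (i + j)) \<le> (\<Sum>i. (1/2::real)^(i + j))"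
      by (rule suminf_le[OF _ sm sgeo]) (use \<epsilon> in \<open>auto intro: less_imp_le\<close>)
    also have "(\<Sum>i. (1/2::real)^(i + j)) = (\<Sum>i. (1/2::real)^i) * (1/2)^j"
      by (simp add: power_add suminf_mult2[symmetric] summable_geometric)
    also have "(\<Sum>i. (1/2::real)^i) = 2" using suminf_geometric[of "1/2::real"] by simp
    finally show ?thesis by (simp add: c_def)
  qed
  have c_sum: "c (j0 + d) = c j0 + (\<Sum>i<d. \<epsilon> (j0 + i))" for j0 d
    by (induct d) (auto simp: cS)

  define U where "U = (\<lambda>j. shift_pmod (c j) (Vs (\<phi> j)))"
  define g where "g = (\<lambda>j s. f j (sh (c j) s))"
  have pmU: "is_pmod sc (U j)" for j unfolding U_def by (rule shift_pmod_pmod[OF mods])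
  have mf: "morph sc sc (\<epsilon> j) (Vs (\<phi> j)) (Vs (\<phi> (Suc j))) (f j)" for j
    using fh[of j] by (simp add: interleaving_def)
  have mh: "morph sc sc (\<epsilon> j) (Vs (\<phi> (Suc j))) (Vs (\<phi> j)) (h j)" for j
    using fh[of j] by (simp add: interleaving_def)
  have gm: "morph sc sc 0 (U j) (U (Suc j)) (g j)" for j
    unfolding U_def g_def by (rule morph_shift_gen[OF mf]) (simp add: cS)
  interpret CS: colim_setup sc U g
    by (intro colim_setup.intro vs pmU gm)

  have close: "interleaved sc (fun_scale sc) (- c j0) (Vs (\<phi> j0)) CS.Vc" for j0
  proof -
    define k where "k = (\<lambda>j s. h j (sh (c (Suc j)) s))"
    define \<delta> where "\<delta> = (\<lambda>j. 2 * \<epsilon> j)"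
    have \<delta>nn: "0 \<le> \<delta> j" for j using \<epsilon>(1) by (simp add: \<delta>_def)
    have km: "morph sc sc (\<delta> j) (U (Suc j)) (U j) (k j)" for j
      unfolding U_def k_def \<delta>_def by (rule morph_shift_gen[OF mh]) (simp add: cS)
    have kg: "k j s (g j s x) = mp (U j) s (sh (\<delta> j) s) x" if x: "x \<in> sp (U j) s" for j s x
    proof -
      have x': "x \<in> sp (Vs (\<phi> j)) (sh (c j) s)" using x by (simp add: U_def)
      have "h j (sh (\<epsilon> j) (sh (c j) s)) (f j (sh (c j) s) x) = mp (Vs (\<phi> j)) (sh (c j) s) (sh (2 * \<epsilon> j) (sh (c j) s)) x"
        using fh[of j] x' by (simp add: interleaving_def del: sh_sh)
      moreover have "sh (\<epsilon> j) (sh (c j) s) = sh (c (Suc j)) s" by (simp add: cS)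
      moreover have "sh (2 * \<epsilon> j) (sh (c j) s) = sh (c j) (sh (\<delta> j) s)" by (simp add: \<delta>_def add.commute)
      ultimately show ?thesis by (simp add: k_def g_def U_def del: sh_sh)
    qed
    have gk: "g j (sh (\<delta> j) s) (k j s y) = mp (U (Suc j)) s (sh (\<delta> j) s) y" if y: "y \<in> sp (U (Suc j)) s" for j s y
    proof -
      have y': "y \<in> sp (Vs (\<phi> (Suc j))) (sh (c (Suc j)) s)" using y by (simp add: U_def)
      have "f j (sh (\<epsilon> j) (sh (c (Suc j)) s)) (h j (sh (c (Suc j)) s) y) = mp (Vs (\<phi> (Suc j))) (sh (c (Suc j)) s) (sh (2 * \<epsilon> j) (sh (c (Suc j)) s)) y"
        using fh[of j] y' by (simp add: interleaving_def del: sh_sh)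
      moreover have "sh (\<epsilon> j) (sh (c (Suc j)) s) = sh (c j) (sh (\<delta> j) s)"
        by (simp only: sh_sh, rule sh_eqI, simp add: cS \<delta>_def)
      moreover have "sh (2 * \<epsilon> j) (sh (c (Suc j)) s) = sh (c (Suc j)) (sh (\<delta> j) s)" by (simp add: \<delta>_def add.commute)
      ultimately show ?thesis by (simp add: k_def g_def U_def del: sh_sh)
    qed
    have Rb: "(\<Sum>i<d. \<delta> (j0 + i)) \<le> 2 * (- c j0)" for d
    proof -
      have "(\<Sum>i<d. \<delta> (j0 + i)) = 2 * (\<Sum>i<d. \<epsilon> (j0 + i))" by (simp add: \<delta>_def sum_distrib_left)
      also have "\<dots> = 2 * (c (j0 + d) - c j0)" using c_sum[of j0 d] by simp
      also have "\<dots> \<le> 2 * (- c j0)" using c_le0[of "j0 + d"] by simp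
      finally show ?thesis .
    qed
    interpret CB: colim_back sc U g k \<delta> j0 "2 * (- c j0)"
      by (rule colim_back.intro[OF CS.colim_setup_axioms colim_back_axioms.intro])
        (use \<delta>nn km kg gk Rb in auto)
    have U0: "shift_pmod (- (- c j0)) (Vs (\<phi> j0)) = U j0" by (simp add: U_def)
    have r0: "0 \<le> - c j0" using c_le0[of j0] by simp
    have "interleaving sc (fun_scale sc) (- c j0) (Vs (\<phi> j0)) CS.Vc (\<lambda>s x. CS.iota j0 (sh (- c j0) s) x) CB.GT"
      apply (rule asym_to_sym[OF r0])
      apply (unfold U0)
      apply (rule CS.iota_morph)
      apply (rule CB.G_morph)
      apply (erule CB.GT_iota)
      apply (erule CB.iota_GT)
      done
    then show ?thesis unfolding interleaved_def by blast
  qed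

  have ev: "eventually (\<lambda>k. dI sc (fun_scale sc) (Vs k) CS.Vc < ereal e) sequentially" if e: "e > 0" for e
  proof -
    obtain N where N: "\<forall>k\<ge>N. \<forall>m\<ge>N. dI sc sc (Vs k) (Vs m) < ereal (e/2)"
      using cauchy[of "e/2"] e by auto
    have "(\<lambda>j. 2 * (1/2::real)^j) \<longlonglongrightarrow> 2 * 0"
      by (intro tendsto_mult tendsto_const LIMSEQ_realpow_zero) auto
    then have "(\<lambda>j. 2 * (1/2::real)^j) \<longlonglongrightarrow> 0" by simp
    from order_tendstoD(2)[OF this, of "e/2"] e
    have "eventually (\<lambda>j. 2 * (1/2::real)^j < e/2) sequentially" by simp
    moreover have "eventually (\<lambda>j. N \<le> j) sequentially" by (rule eventually_ge_at_top)
    ultimately have "eventually (\<lambda>j. 2 * (1/2::real)^j < e/2 \<and> N \<le> j) sequentially"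
      by (rule eventually_conj)
    then obtain j0 where j0: "2 * (1/2::real)^j0 < e/2" "N \<le> j0"
      unfolding eventually_sequentially by auto
    have Nj: "N \<le> \<phi> j0" using j0(2) seq_suble[OF sm\<phi>, of j0] by simp
    have "dI sc (fun_scale sc) (Vs k) CS.Vc < ereal e" if k: "k \<ge> N" for k
    proof -
      obtain e1 where e1: "0 \<le> e1" "e1 < e/2" "interleaved sc sc e1 (Vs k) (Vs (\<phi> j0))"
        using dI_lt N k Nj by blast
      obtain f1 g1 where i1: "interleaving sc sc e1 (Vs k) (Vs (\<phi> j0)) f1 g1"
        using e1(3) unfolding interleaved_def by blast
      obtain f2 g2 where i2: "interleaving sc (fun_scale sc) (- c j0) (Vs (\<phi> j0)) CS.Vc f2 g2"
        using close[of j0] unfolding interleaved_def by blast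
      have "interleaved sc (fun_scale sc) (e1 + - c j0) (Vs k) CS.Vc"
        using interleaving_comp[OF mods CS.V_pmod i1 i2] unfolding interleaved_def by blast
      then have "dI sc (fun_scale sc) (Vs k) CS.Vc \<le> ereal (e1 + - c j0)"
        by (rule dI_le) (use e1 c_le0[of j0] in simp)
      also have "ereal (e1 + - c j0) < ereal e" using e1(2) c_bd[of j0] j0(1) by simp
      finally show ?thesis .
    qed
    then show ?thesis unfolding eventually_sequentially by blast
  qed

  have lim: "(\<lambda>k. dI sc (fun_scale sc) (Vs k) CS.Vc) \<longlonglongrightarrow> 0"
    unfolding order_tendsto_iff
  proof (intro conjI allI impI)
    fix l :: ereal assume "l < 0"
    then show "eventually (\<lambda>k. l < dI sc (fun_scale sc) (Vs k) CS.Vc) sequentially"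
      using dI_nn by (metis (no_types, lifting) always_eventually order_less_le_trans)
  next
    fix u :: ereal assume u: "0 < u"
    show "eventually (\<lambda>k. dI sc (fun_scale sc) (Vs k) CS.Vc < u) sequentially"
    proof (cases u)
      case (real r)
      then show ?thesis using ev[of r] u by simp
    next
      case PInf
      have ev1: "eventually (\<lambda>k. dI sc (fun_scale sc) (Vs k) CS.Vc < ereal 1) sequentially"
        by (rule ev) simp
      show ?thesis using ev1
      proof (rule eventually_mono)
        fix x :: nat assume "dI sc (fun_scale sc) (Vs x) CS.Vc < ereal 1"
        then show "dI sc (fun_scale sc) (Vs x) CS.Vc < u" unfolding PInf by auto
      qed
    next
      case MInf then show ?thesis using u by simp
    qed
  qed

  show ?thesis
  proof (intro exI conjI)
    show "is_pmod (fun_scale sc) CS.Vc" by (rule CS.V_pmod)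
    show "(\<lambda>k. dI sc (fun_scale sc) (Vs k) CS.Vc) \<longlonglongrightarrow> 0" by (rule lim)
    show "strict_mono \<phi>" by (rule sm\<phi>)
    show "\<forall>j. \<exists>g. interleaving sc sc (\<epsilon> j) (Vs (\<phi> j)) (Vs (\<phi> (Suc j))) (f j) g" using fh by blast
    show "\<forall>j. c (Suc j) = c j + \<epsilon> j" using cS by blast
    show "is_seq_colim sc (fun_scale sc) (\<lambda>j. shift_pmod (c j) (Vs (\<phi> j))) (\<lambda>j s. f j (sh (c j) s)) CS.Vc CS.iota"
      using CS.colim unfolding U_def g_def .
  qed
qed

end
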